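(* For any category $\mathbf{E}$, the virtual double category $\mathbb{C}\mathrm{ospan}(\mathbf{E})$ has globular decompositions.
   Context: A virtual double category (VDC) has objects, tight arrows, loose arrows, and $n$-ary multicells from a composable path of $n$ loose arrows (an object when $n=0$) to a loose arrow with two tight sides, with identities and associative unital composition $\frac{\alpha_1\cdots\alpha_m}{\beta}$. A multicell is globular if its tight sides are identities. Globular decompositions: for $n\ge0$, $\mathbb{D}$ has $n$-ary globular decompositions if for every $n$-ary multicell $\alpha$ and every $m\ge1$ and $k_1+\cdots+k_m=n$ ($k_i\ge0$), $\alpha$ can be written as $\frac{\alpha_1\cdots\alpha_m}{\beta}$ with $\alpha_i$ $k_i$-ary and $\beta$ a globular $m$-ary multicell, and any two such decompositions are equivalent under the equivalence relation generated by $(\frac{\alpha_1}{\sigma_1},\dots,\frac{\alpha_m}{\sigma_m};\beta)\sim(\alpha_1,\dots,\alpha_m;\frac{\sigma_1\cdots\sigma_m}{\beta})$ for compatible rows $(\sigma_1,\dots,\sigma_m)$ of unary multicells whose outermost tight sides are identities. $\mathbb{D}$ has globular decompositions if it has $n$-ary globular decompositions for all $n\ge0$. $\mathbb{C}\mathrm{ospan}(\mathbf{E})$ has tight category $\mathbf{E}$, loose arrows the cospans $x\xrightarrow{a}z\xleftarrow{b}y$, and $n$-ary multicells from $x_{i-1}\xrightarrow{a_i}y_i\xleftarrow{b_i}x_i$ ($1\le i\le n$) to $z_0\xrightarrow{d_0}w\xleftarrow{d_1}z_1$ with tight sides $c_0,c_1$ given by morphisms $e_i:y_i\to w$ with $e_1a_1=d_0c_0$,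 $e_ib_i=e_{i+1}a_{i+1}$, $e_nb_n=d_1c_1$ (for $n=0$ the condition $d_0c_0=d_1c_1$); composition by pasting. *)

theory Defs
  imports Main
begin

record ('o,'m) category =
  cat_obj  :: "'o set"
  cat_arr  :: "'m set"
  cat_dom  :: "'m \<Rightarrow> 'o"
  cat_cod  :: "'m \<Rightarrow> 'o"
  cat_id   :: "'o \<Rightarrow> 'm"
  cat_comp :: "'m \<Rightarrow> 'm \<Rightarrow> 'm"   (* cat_comp g f = g \<circ> f *)

definition is_category :: "('o,'m) category \<Rightarrow> bool" where
  "is_category E \<longleftrightarrow>
     (\<forall>f\<in>cat_arr E. cat_dom E f \<in> cat_obj E \<and> cat_cod E f \<in> cat_obj E) \<and>
     (\<forall>x\<in>cat_obj E. cat_id E x \<in> cat_arr E \<and> cat_dom E (cat_id E x) = x \<and> cat_cod E (cat_id E x) = x) \<and>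
     (\<forall>f\<in>cat_arr E. \<forall>g\<in>cat_arr E. cat_cod E f = cat_dom E g \<longrightarrow>
        cat_comp E g f \<in> cat_arr E \<and> cat_dom E (cat_comp E g f) = cat_dom E f \<and>
        cat_cod E (cat_comp E g f) = cat_cod E g) \<and>
     (\<forall>f\<in>cat_arr E. cat_comp E (cat_id E (cat_cod E f)) f = f \<and> cat_comp E f (cat_id E (cat_dom E f)) = f) \<and>
     (\<forall>f\<in>cat_arr E. \<forall>g\<in>cat_arr E. \<forall>h\<in>cat_arr E.
        cat_cod E f = cat_dom E g \<and> cat_cod E g = cat_dom E h \<longrightarrow>
        cat_comp E h (cat_comp E g f) = cat_comp E (cat_comp E h g) f)"

text \<open>A multicell c has input path vcin c (a list of loose arrows; the empty list
  means the source is the object tdom (vcleft c) = tdom (vcright c)), output loose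
  arrow vcout c, and tight sides vcleft c, vcright c. The composite of a row
  alpha_1 ... alpha_m over beta is vccomp [alpha_1,...,alpha_m] beta.\<close>

record ('o,'t,'l,'c) vdc =
  vob     :: "'o set"
  vtight  :: "'t set"
  vloose  :: "'l set"
  vcell   :: "'c set"
  tdom    :: "'t \<Rightarrow> 'o"
  tcod    :: "'t \<Rightarrow> 'o"
  tid     :: "'o \<Rightarrow> 't"
  tcomp   :: "'t \<Rightarrow> 't \<Rightarrow> 't"
  lsrc    :: "'l \<Rightarrow> 'o"
  ltgt    :: "'l \<Rightarrow> 'o"
  vcin    :: "'c \<Rightarrow> 'l list"
  vcout   :: "'c \<Rightarrow> 'l"
  vcleft  :: "'c \<Rightarrow> 't"
  vcright :: "'c \<Rightarrow> 't"
  vccomp  :: "'c list \<Rightarrow> 'c \<Rightarrow> 'c"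
  vcid    :: "'l \<Rightarrow> 'c"

definition arity :: "('o,'t,'l,'c) vdc \<Rightarrow> 'c \<Rightarrow> nat" where
  "arity V c = length (vcin V c)"

definition composable :: "('o,'t,'l,'c) vdc \<Rightarrow> 'c list \<Rightarrow> 'c \<Rightarrow> bool" where
  "composable V as b \<longleftrightarrow>
     length as = length (vcin V b) \<and>
     (\<forall>i<length as. vcout V (as ! i) = vcin V b ! i) \<and>
     (\<forall>i. Suc i < length as \<longrightarrow> vcright V (as ! i) = vcleft V (as ! Suc i))"

definition globular :: "('o,'t,'l,'c) vdc \<Rightarrow> 'c \<Rightarrow> bool" where
  "globular V c \<longleftrightarrow>
     vcleft V c = tid V (tdom V (vcleft V c)) \<and> vcright V c = tid V (tdom V (vcright V c))"

definition is_gdecomp ::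
  "('o,'t,'l,'c) vdc \<Rightarrow> 'c \<Rightarrow> nat list \<Rightarrow> 'c list \<times> 'c \<Rightarrow> bool" where
  "is_gdecomp V \<alpha> ks d \<longleftrightarrow>
     (case d of (as, b) \<Rightarrow>
        b \<in> vcell V \<and> set as \<subseteq> vcell V \<and> composable V as b \<and>
        length as = length ks \<and> (\<forall>i<length ks. arity V (as ! i) = ks ! i) \<and>
        globular V b \<and> arity V b = length ks \<and> vccomp V as b = \<alpha>)"

text \<open>Generating step: (alpha_1/sigma_1, ..., alpha_m/sigma_m; beta) to
  (alpha_1, ..., alpha_m; sigma_1...sigma_m/beta), for a compatible row of unary
  multicells sigma whose outermost tight sides are identities.\<close>
definition gd_step :: "('o,'t,'l,'c) vdc \<Rightarrow> 'c list \<times> 'c \<Rightarrow> 'c list \<times> 'c \<Rightarrow> bool" where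
  "gd_step V d d' \<longleftrightarrow>
     (\<exists>as b ss.
        d = (map2 (\<lambda>a s. vccomp V [a] s) as ss, b) \<and> d' = (as, vccomp V ss b) \<and>
        ss \<noteq> [] \<and> length ss = length as \<and> set ss \<subseteq> vcell V \<and>
        (\<forall>i<length ss. arity V (ss ! i) = 1 \<and> composable V [as ! i] (ss ! i)) \<and>
        composable V ss b \<and>
        vcleft V (hd ss) = tid V (tdom V (vcleft V (hd ss))) \<and>
        vcright V (last ss) = tid V (tdom V (vcright V (last ss))))"

definition gd_equiv ::
  "('o,'t,'l,'c) vdc \<Rightarrow> 'c \<Rightarrow> nat list \<Rightarrow> 'c list \<times> 'c \<Rightarrow> 'c list \<times> 'c \<Rightarrow> bool" where
  "gd_equiv V \<alpha> ks =
     (\<lambda>d d'. is_gdecomp V \<alpha> ks d \<and> is_gdecomp V \<alpha> ks d' \<and>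
             (gd_step V d d' \<or> gd_step V d' d))\<^sup>*\<^sup>*"

definition has_nary_globular_decompositions :: "('o,'t,'l,'c) vdc \<Rightarrow> nat \<Rightarrow> bool" where
  "has_nary_globular_decompositions V n \<longleftrightarrow>
     (\<forall>\<alpha>\<in>vcell V. arity V \<alpha> = n \<longrightarrow>
        (\<forall>ks. ks \<noteq> [] \<and> sum_list ks = n \<longrightarrow>
           (\<exists>d. is_gdecomp V \<alpha> ks d) \<and>
           (\<forall>d d'. is_gdecomp V \<alpha> ks d \<and> is_gdecomp V \<alpha> ks d' \<longrightarrow> gd_equiv V \<alpha> ks d d')))"

definition has_globular_decompositions :: "('o,'t,'l,'c) vdc \<Rightarrow> bool" where
  "has_globular_decompositions V \<longleftrightarrow> (\<forall>n. has_nary_globular_decompositions V n)"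

text \<open>A loose arrow is a cospan (a, b): x --a--> z <--b-- y. A multicell records its
  input cospans, output cospan (d0, d1), tight sides c0, c1 and the legs e_i.\<close>

record 'm cospan_cell =
  cc_ins   :: "('m \<times> 'm) list"
  cc_out   :: "'m \<times> 'm"
  cc_left  :: "'m"
  cc_right :: "'m"
  cc_legs  :: "'m list"

definition cospans :: "('o,'m) category \<Rightarrow> ('m \<times> 'm) set" where
  "cospans E = {(a, b). a \<in> cat_arr E \<and> b \<in> cat_arr E \<and> cat_cod E a = cat_cod E b}"

definition cospan_cells :: "('o,'m) category \<Rightarrow> 'm cospan_cell set" where
  "cospan_cells E = {c.
     let ins = cc_ins c; n = length ins; (d0, d1) = cc_out c; c0 = cc_left c; c1 = cc_right c;
         es = cc_legs c; comp = cat_comp E; dom = cat_dom E; cod = cat_cod E in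
     set ins \<subseteq> cospans E \<and> (d0, d1) \<in> cospans E \<and> c0 \<in> cat_arr E \<and> c1 \<in> cat_arr E \<and>
     length es = n \<and> cod c0 = dom d0 \<and> cod c1 = dom d1 \<and>
     (if n = 0 then dom c0 = dom c1 \<and> comp d0 c0 = comp d1 c1
      else dom c0 = dom (fst (ins ! 0)) \<and> dom c1 = dom (snd (ins ! (n - 1))) \<and>
        (\<forall>i. Suc i < n \<longrightarrow> dom (snd (ins ! i)) = dom (fst (ins ! Suc i))) \<and>
        (\<forall>i<n. es ! i \<in> cat_arr E \<and> dom (es ! i) = cod (fst (ins ! i)) \<and> cod (es ! i) = cod d0) \<and>
        comp (es ! 0) (fst (ins ! 0)) = comp d0 c0 \<and>
        (\<forall>i. Suc i < n \<longrightarrow> comp (es ! i) (snd (ins ! i)) = comp (es ! Suc i) (fst (ins ! Suc i))) \<and>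
        comp (es ! (n - 1)) (snd (ins ! (n - 1))) = comp d1 c1)}"

definition cospan_ccomp ::
  "('o,'m) category \<Rightarrow> 'm cospan_cell list \<Rightarrow> 'm cospan_cell \<Rightarrow> 'm cospan_cell" where
  "cospan_ccomp E as b =
     \<lparr> cc_ins = concat (map cc_ins as),
       cc_out = cc_out b,
       cc_left = (if as = [] then cc_left b else cat_comp E (cc_left b) (cc_left (hd as))),
       cc_right = (if as = [] then cc_right b else cat_comp E (cc_right b) (cc_right (last as))),
       cc_legs = concat (map2 (\<lambda>a f. map (\<lambda>e. cat_comp E f e) (cc_legs a)) as (cc_legs b)) \<rparr>"

definition cospan_cid :: "('o,'m) category \<Rightarrow> 'm \<times> 'm \<Rightarrow> 'm cospan_cell" where
  "cospan_cid E l =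
     \<lparr> cc_ins = [l], cc_out = l,
       cc_left = cat_id E (cat_dom E (fst l)), cc_right = cat_id E (cat_dom E (snd l)),
       cc_legs = [cat_id E (cat_cod E (fst l))] \<rparr>"

definition Cospan :: "('o,'m) category \<Rightarrow> ('o, 'm, 'm \<times> 'm, 'm cospan_cell) vdc" where
  "Cospan E =
     \<lparr> vob = cat_obj E, vtight = cat_arr E, vloose = cospans E, vcell = cospan_cells E,
       tdom = cat_dom E, tcod = cat_cod E, tid = cat_id E, tcomp = cat_comp E,
       lsrc = (\<lambda>l. cat_dom E (fst l)), ltgt = (\<lambda>l. cat_dom E (snd l)),
       vcin = cc_ins, vcout = cc_out, vcleft = cc_left, vcright = cc_right,
       vccomp = cospan_ccomp E, vcid = cospan_cid E \<rparr>"

end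

theory Submission
  imports Defs
begin

lemma concat_block_take:
  "length xss = length ks \<Longrightarrow> (\<forall>i<length ks. length (xss!i) = ks!i) \<Longrightarrow> i < length ks \<Longrightarrow>
   take (ks!i) (drop (sum_list (take i ks)) (concat xss)) = xss!i"
proof (induction xss arbitrary: ks i)
  case Nil then show ?case by simp
next
  case (Cons xs xss)
  then obtain k ks' where ks: "ks = k # ks'" by (cases ks) auto
  have lx: "length xs = k" using Cons.prems(2) ks by force
  show ?case
  proof (cases i)
    case 0 then show ?thesis using ks lx by simp
  next
    case (Suc i')
    have "take (ks'!i') (drop (sum_list (take i' ks')) (concat xss)) = xss!i'"
      using Cons.IH[of ks' i'] Cons.prems ks Suc by force
    then show ?thesis using ks lx Suc by (simp add: add.commute)
  qed
qed

lemma concat_block_nth: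
  assumes "length xss = length ks" "\<forall>i<length ks. length (xss!i) = ks!i" "i < length ks" "j < ks!i"
  shows "concat xss ! (sum_list (take i ks) + j) = xss!i!j"
proof -
  have "xss!i!j = take (ks!i) (drop (sum_list (take i ks)) (concat xss)) ! j"
    using concat_block_take[OF assms(1-3)] by simp
  also have "\<dots> = drop (sum_list (take i ks)) (concat xss) ! j" using assms(4) by simp
  also have "\<dots> = concat xss ! (sum_list (take i ks) + j)"
  proof -
    have "j < length (take (ks!i) (drop (sum_list (take i ks)) (concat xss)))"
      using concat_block_take[OF assms(1-3)] assms by simp
    then have "sum_list (take i ks) + j < length (concat xss)" by (simp only: length_take length_drop)
    then show ?thesis by simp
  qed
  finally show ?thesis by simp
qed

lemma concat_blocks:
  "concat (map (\<lambda>i. take (ks!i) (drop (sum_list (take i ks)) xs)) [0..<length ks]) = take (sum_list ks) xs"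
proof (induction ks arbitrary: xs)
  case Nil then show ?case by simp
next
  case (Cons k ks)
  have "concat (map (\<lambda>i. take ((k#ks)!i) (drop (sum_list (take i (k#ks))) xs)) [0..<length (k#ks)])
      = take k xs @ concat (map (\<lambda>i. take (ks!i) (drop (sum_list (take i ks)) (drop k xs))) [0..<length ks])"
    by (simp only: length_Cons map_upt_Suc) (simp add: add.commute)
  also have "\<dots> = take (sum_list (k#ks)) xs" using Cons.IH[of "drop k xs"] by (simp add: take_add)
  finally show ?case .
qed

lemma sum_take_Suc: "i < length ks \<Longrightarrow> sum_list (take (Suc i) ks) = sum_list (take i ks) + ks!i"
  by (simp add: take_Suc_conv_app_nth)

lemma sum_take_le: "sum_list (take i (ks::nat list)) \<le> sum_list ks"
  by (metis append_take_drop_id le_add1 sum_list_append)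

lemma sum_take_Suc_le: "i < length ks \<Longrightarrow> sum_list (take i ks) + ks!i \<le> sum_list (ks::nat list)"
  using sum_take_Suc sum_take_le by metis

context
  fixes E :: "('o,'m) category"
  assumes cat: "is_category E"
begin

abbreviation "arr \<equiv> cat_arr E"
abbreviation "dm \<equiv> cat_dom E"
abbreviation "cd \<equiv> cat_cod E"
abbreviation "cmp \<equiv> cat_comp E"
abbreviation "idt \<equiv> cat_id E"

lemma c_dom_obj: "f \<in> arr \<Longrightarrow> dm f \<in> cat_obj E" using cat unfolding is_category_def by blast
lemma c_cod_obj: "f \<in> arr \<Longrightarrow> cd f \<in> cat_obj E" using cat unfolding is_category_def by blast
lemma c_id: "x \<in> cat_obj E \<Longrightarrow> idt x \<in> arr" using cat unfolding is_category_def by blast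
lemma c_id_dom[simp]: "x \<in> cat_obj E \<Longrightarrow> dm (idt x) = x" using cat unfolding is_category_def by blast
lemma c_id_cod[simp]: "x \<in> cat_obj E \<Longrightarrow> cd (idt x) = x" using cat unfolding is_category_def by blast
lemma c_comp: "f \<in> arr \<Longrightarrow> g \<in> arr \<Longrightarrow> cd f = dm g \<Longrightarrow> cmp g f \<in> arr"
  using cat unfolding is_category_def by blast
lemma c_comp_dom[simp]: "f \<in> arr \<Longrightarrow> g \<in> arr \<Longrightarrow> cd f = dm g \<Longrightarrow> dm (cmp g f) = dm f"
  using cat unfolding is_category_def by blast
lemma c_comp_cod[simp]: "f \<in> arr \<Longrightarrow> g \<in> arr \<Longrightarrow> cd f = dm g \<Longrightarrow> cd (cmp g f) = cd g"
  using cat unfolding is_category_def by blast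
lemma c_idl: "f \<in> arr \<Longrightarrow> cd f = x \<Longrightarrow> cmp (idt x) f = f"
  using cat unfolding is_category_def by blast
lemma c_idr: "f \<in> arr \<Longrightarrow> dm f = x \<Longrightarrow> cmp f (idt x) = f"
  using cat unfolding is_category_def by blast
lemma c_assoc: "f \<in> arr \<Longrightarrow> g \<in> arr \<Longrightarrow> h \<in> arr \<Longrightarrow> cd f = dm g \<Longrightarrow> cd g = dm h \<Longrightarrow>
   cmp h (cmp g f) = cmp (cmp h g) f"
  using cat unfolding is_category_def by blast

definition gfun :: "'m cospan_cell \<Rightarrow> nat \<Rightarrow> 'm" where
  "gfun c j = (if j = 0 then cmp (fst (cc_out c)) (cc_left c)
     else cmp (cc_legs c ! (j-1)) (snd (cc_ins c ! (j-1))))"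

definition ctyp :: "'m cospan_cell \<Rightarrow> bool" where
  "ctyp c \<longleftrightarrow> set (cc_ins c) \<subseteq> cospans E \<and> cc_out c \<in> cospans E \<and>
     cc_left c \<in> arr \<and> cc_right c \<in> arr \<and>
     cd (cc_left c) = dm (fst (cc_out c)) \<and> cd (cc_right c) = dm (snd (cc_out c)) \<and>
     length (cc_legs c) = length (cc_ins c) \<and>
     (\<forall>j<length (cc_ins c). cc_legs c ! j \<in> arr \<and> dm (cc_legs c ! j) = cd (fst (cc_ins c ! j))
        \<and> cd (cc_legs c ! j) = cd (fst (cc_out c)))"

definition ceqs :: "'m cospan_cell \<Rightarrow> (nat \<Rightarrow> 'm) \<Rightarrow> bool" where
  "ceqs c G \<longleftrightarrow> G 0 = cmp (fst (cc_out c)) (cc_left c) \<and>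
     G (length (cc_ins c)) = cmp (snd (cc_out c)) (cc_right c) \<and>
     (\<forall>j<length (cc_ins c). cmp (cc_legs c ! j) (fst (cc_ins c ! j)) = G j \<and>
        cmp (cc_legs c ! j) (snd (cc_ins c ! j)) = G (Suc j))"

lemma cospansD: "l \<in> cospans E \<Longrightarrow> fst l \<in> arr \<and> snd l \<in> arr \<and> cd (fst l) = cd (snd l)"
  unfolding cospans_def by auto

lemma cospansI: "a \<in> arr \<Longrightarrow> b \<in> arr \<Longrightarrow> cd a = cd b \<Longrightarrow> (a, b) \<in> cospans E"
  unfolding cospans_def by auto

lemma cell_intro:
  assumes T: "ctyp c" and Q: "ceqs c G"
  shows "c \<in> cospan_cells E"
proof -
  obtain d0 d1 where o: "cc_out c = (d0, d1)" by (cases "cc_out c") auto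
  define I where "I = cc_ins c"
  define n where "n = length I"
  define es where "es = cc_legs c"
  have insc: "\<And>j. j < n \<Longrightarrow> fst (I!j) \<in> arr \<and> snd (I!j) \<in> arr \<and> cd (fst (I!j)) = cd (snd (I!j))"
    using T unfolding ctyp_def I_def n_def by (meson cospansD nth_mem subsetD)
  have es: "\<And>j. j < n \<Longrightarrow> es!j \<in> arr \<and> dm (es!j) = cd (fst (I!j)) \<and> cd (es!j) = cd d0"
    using T unfolding ctyp_def I_def n_def es_def o by auto
  have d: "d0 \<in> arr" "d1 \<in> arr" "cd d0 = cd d1" using T o unfolding ctyp_def by (auto dest: cospansD)
  have cs: "cc_left c \<in> arr" "cc_right c \<in> arr" "cd (cc_left c) = dm d0" "cd (cc_right c) = dm d1"
    using T o unfolding ctyp_def by auto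
  have G0: "G 0 = cmp d0 (cc_left c)" and Gn: "G n = cmp d1 (cc_right c)"
    and Gj: "\<And>j. j < n \<Longrightarrow> cmp (es!j) (fst (I!j)) = G j \<and> cmp (es!j) (snd (I!j)) = G (Suc j)"
    using Q o unfolding ceqs_def I_def n_def es_def by auto
  have dG0: "dm (G 0) = dm (cc_left c)" using G0 cs d by simp
  have dGn: "dm (G n) = dm (cc_right c)" using Gn cs d by simp
  have dGf: "\<And>j. j < n \<Longrightarrow> dm (G j) = dm (fst (I!j))"
    using Gj insc es by (metis c_comp_dom)
  have dGs: "\<And>j. j < n \<Longrightarrow> dm (G (Suc j)) = dm (snd (I!j))"
    using Gj insc es by (metis c_comp_dom)
  have A: "set I \<subseteq> cospans E" using T unfolding ctyp_def I_def by auto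
  have B: "length es = n" using T unfolding ctyp_def I_def es_def n_def by auto
  have C: "if n = 0 then dm (cc_left c) = dm (cc_right c) \<and> cmp d0 (cc_left c) = cmp d1 (cc_right c)
      else dm (cc_left c) = dm (fst (I ! 0)) \<and> dm (cc_right c) = dm (snd (I ! (n - 1))) \<and>
        (\<forall>i. Suc i < n \<longrightarrow> dm (snd (I ! i)) = dm (fst (I ! Suc i))) \<and>
        (\<forall>i<n. es ! i \<in> arr \<and> dm (es ! i) = cd (fst (I ! i)) \<and> cd (es ! i) = cd d0) \<and>
        cmp (es ! 0) (fst (I ! 0)) = cmp d0 (cc_left c) \<and>
        (\<forall>i. Suc i < n \<longrightarrow> cmp (es ! i) (snd (I ! i)) = cmp (es ! Suc i) (fst (I ! Suc i))) \<and>
        cmp (es ! (n - 1)) (snd (I ! (n - 1))) = cmp d1 (cc_right c)"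
  proof (cases "n = 0")
    case True
    then show ?thesis using G0 Gn dG0 dGn by simp
  next
    case False
    have n1: "n - 1 < n" "Suc (n - 1) = n" using False by auto
    have l1: "dm (cc_left c) = dm (fst (I ! 0))" using dG0 dGf False by simp
    have l2: "dm (cc_right c) = dm (snd (I ! (n - 1)))" using dGn dGs[OF n1(1)] n1 by simp
    have l3: "\<forall>i. Suc i < n \<longrightarrow> dm (snd (I ! i)) = dm (fst (I ! Suc i))"
      using dGs dGf Suc_lessD by metis
    have l5: "cmp (es ! 0) (fst (I ! 0)) = cmp d0 (cc_left c)" using Gj[of 0] False G0 by simp
    have l6: "\<forall>i. Suc i < n \<longrightarrow> cmp (es ! i) (snd (I ! i)) = cmp (es ! Suc i) (fst (I ! Suc i))"
      using Gj Suc_lessD by metis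
    have l7: "cmp (es ! (n - 1)) (snd (I ! (n - 1))) = cmp d1 (cc_right c)"
      using Gj[OF n1(1)] n1 Gn by simp
    show ?thesis using False l1 l2 l3 l5 l6 l7 es by simp
  qed
  show ?thesis
    unfolding cospan_cells_def Let_def
    using A B C cs d o unfolding I_def es_def n_def
    by (auto intro: cospansI)
qed

lemma cell_elim:
  assumes c: "c \<in> cospan_cells E"
  shows "ctyp c" "ceqs c (gfun c)"
proof -
  obtain d0 d1 where o: "cc_out c = (d0, d1)" by (cases "cc_out c") auto
  define I where "I = cc_ins c"
  define n where "n = length I"
  define es where "es = cc_legs c"
  have H: "set I \<subseteq> cospans E \<and> (d0, d1) \<in> cospans E \<and> cc_left c \<in> arr \<and> cc_right c \<in> arr \<and>
     length es = n \<and> cd (cc_left c) = dm d0 \<and> cd (cc_right c) = dm d1 \<and>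
     (if n = 0 then dm (cc_left c) = dm (cc_right c) \<and> cmp d0 (cc_left c) = cmp d1 (cc_right c)
      else dm (cc_left c) = dm (fst (I ! 0)) \<and> dm (cc_right c) = dm (snd (I ! (n - 1))) \<and>
        (\<forall>i. Suc i < n \<longrightarrow> dm (snd (I ! i)) = dm (fst (I ! Suc i))) \<and>
        (\<forall>i<n. es ! i \<in> arr \<and> dm (es ! i) = cd (fst (I ! i)) \<and> cd (es ! i) = cd d0) \<and>
        cmp (es ! 0) (fst (I ! 0)) = cmp d0 (cc_left c) \<and>
        (\<forall>i. Suc i < n \<longrightarrow> cmp (es ! i) (snd (I ! i)) = cmp (es ! Suc i) (fst (I ! Suc i))) \<and>
        cmp (es ! (n - 1)) (snd (I ! (n - 1))) = cmp d1 (cc_right c))"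
    using c unfolding cospan_cells_def Let_def I_def n_def es_def by (simp add: o del: One_nat_def)
  show "ctyp c" unfolding ctyp_def using H
    by (auto simp: o I_def[symmetric] es_def[symmetric] n_def[symmetric] split: if_splits)
  have g0: "gfun c 0 = cmp d0 (cc_left c)" unfolding gfun_def by (simp add: o)
  have gs: "\<And>j. gfun c (Suc j) = cmp (es ! j) (snd (I ! j))" unfolding gfun_def es_def I_def by simp
  show "ceqs c (gfun c)" unfolding ceqs_def I_def[symmetric] n_def[symmetric] es_def[symmetric] o fst_conv snd_conv
  proof (intro conjI allI impI)
    show "gfun c 0 = cmp d0 (cc_left c)" by (rule g0)
    show "gfun c n = cmp d1 (cc_right c)"
      using H g0 gs[of "n-1"] by (cases n) (auto split: if_splits)
    fix j assume j: "j < n"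
    show "cmp (es ! j) (snd (I ! j)) = gfun c (Suc j)" by (rule gs[symmetric])
    show "cmp (es ! j) (fst (I ! j)) = gfun c j"
    proof (cases j)
      case 0 then show ?thesis using H j g0 by (auto split: if_splits)
    next
      case (Suc i) then show ?thesis using H j gs[of i] by (auto split: if_splits)
    qed
  qed
qed

lemma Cospan_simps[simp]:
  "vcell (Cospan E) = cospan_cells E" "vcin (Cospan E) = cc_ins" "vcout (Cospan E) = cc_out"
  "vcleft (Cospan E) = cc_left" "vcright (Cospan E) = cc_right" "vccomp (Cospan E) = cospan_ccomp E"
  "tid (Cospan E) = idt" "tdom (Cospan E) = dm"
  by (simp_all add: Cospan_def)

lemma gfun_typ:
  assumes a: "a \<in> cospan_cells E" and j: "j \<le> length (cc_ins a)"
  shows "gfun a j \<in> arr \<and> cd (gfun a j) = cd (fst (cc_out a))"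
proof -
  have T: "ctyp a" and Q: "ceqs a (gfun a)" using cell_elim[OF a] by auto
  obtain d0 d1 where o: "cc_out a = (d0, d1)" by (cases "cc_out a") auto
  have d: "d0 \<in> arr" "d1 \<in> arr" "cd d0 = cd d1" using T o unfolding ctyp_def by (auto dest: cospansD)
  show ?thesis
  proof (cases "j < length (cc_ins a)")
    case True
    have "fst (cc_ins a ! j) \<in> arr" using T True unfolding ctyp_def by (meson cospansD nth_mem subsetD)
    moreover have "gfun a j = cmp (cc_legs a ! j) (fst (cc_ins a ! j))" using Q True unfolding ceqs_def by auto
    ultimately show ?thesis using T True unfolding ctyp_def by (auto intro: c_comp)
  next
    case False
    then have "j = length (cc_ins a)" using j by simp
    then have "gfun a j = cmp d1 (cc_right a)" using Q o unfolding ceqs_def by auto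
    then show ?thesis using T o d unfolding ctyp_def by (auto intro: c_comp)
  qed
qed

definition canL where "canL a ks i = (if i = 0 then fst (cc_out a) else gfun a (sum_list (take i ks)))"
definition canR where "canR a ks i = (if Suc i = length ks then snd (cc_out a) else gfun a (sum_list (take (Suc i) ks)))"
definition canl where "canl a ks i = (if i = 0 then cc_left a else idt (dm (gfun a (sum_list (take i ks)))))"
definition canr where "canr a ks i = (if Suc i = length ks then cc_right a else idt (dm (gfun a (sum_list (take (Suc i) ks)))))"
definition can where "can a ks i =
  \<lparr> cc_ins = take (ks!i) (drop (sum_list (take i ks)) (cc_ins a)), cc_out = (canL a ks i, canR a ks i),
    cc_left = canl a ks i, cc_right = canr a ks i,
    cc_legs = take (ks!i) (drop (sum_list (take i ks)) (cc_legs a)) \<rparr>"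
definition bcan where "bcan a ks =
  \<lparr> cc_ins = map (\<lambda>i. (canL a ks i, canR a ks i)) [0..<length ks], cc_out = cc_out a,
    cc_left = idt (cd (cc_left a)), cc_right = idt (cd (cc_right a)),
    cc_legs = replicate (length ks) (idt (cd (fst (cc_out a)))) \<rparr>"

lemma can_facts:
  assumes a: "a \<in> cospan_cells E" and ks: "sum_list ks = length (cc_ins a)" and i: "i < length ks"
  shows "canL a ks i \<in> arr \<and> cd (canL a ks i) = cd (fst (cc_out a))"
    "canR a ks i \<in> arr \<and> cd (canR a ks i) = cd (fst (cc_out a))"
    "cmp (canL a ks i) (canl a ks i) = gfun a (sum_list (take i ks))"
    "cmp (canR a ks i) (canr a ks i) = gfun a (sum_list (take (Suc i) ks))"
    "canl a ks i \<in> arr" "cd (canl a ks i) = dm (canL a ks i)"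
    "canr a ks i \<in> arr" "cd (canr a ks i) = dm (canR a ks i)"
proof -
  have T: "ctyp a" and Q: "ceqs a (gfun a)" using cell_elim[OF a] by auto
  obtain d0 d1 where o: "cc_out a = (d0, d1)" by (cases "cc_out a") auto
  have d: "d0 \<in> arr" "d1 \<in> arr" "cd d0 = cd d1" using T o unfolding ctyp_def by (auto dest: cospansD)
  have cs: "cc_left a \<in> arr" "cc_right a \<in> arr" "cd (cc_left a) = dm d0" "cd (cc_right a) = dm d1"
    using T o unfolding ctyp_def by auto
  have le1: "sum_list (take i ks) \<le> length (cc_ins a)" using ks sum_take_le by metis
  have le2: "sum_list (take (Suc i) ks) \<le> length (cc_ins a)" using ks sum_take_le by metis
  have g1: "gfun a (sum_list (take i ks)) \<in> arr \<and> cd (gfun a (sum_list (take i ks))) = cd d0"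
    using gfun_typ[OF a le1] o by simp
  have g2: "gfun a (sum_list (take (Suc i) ks)) \<in> arr \<and> cd (gfun a (sum_list (take (Suc i) ks))) = cd d0"
    using gfun_typ[OF a le2] o by simp
  have g0: "gfun a 0 = cmp d0 (cc_left a)" using Q o unfolding ceqs_def by simp
  have gn: "gfun a (length (cc_ins a)) = cmp d1 (cc_right a)" using Q o unfolding ceqs_def by simp
  have lastS: "Suc i = length ks \<Longrightarrow> sum_list (take (Suc i) ks) = length (cc_ins a)" using ks by simp
  show "canL a ks i \<in> arr \<and> cd (canL a ks i) = cd (fst (cc_out a))"
    unfolding canL_def using d g1 o by simp
  show "canR a ks i \<in> arr \<and> cd (canR a ks i) = cd (fst (cc_out a))"
    unfolding canR_def using d g2 o by simp
  show "cmp (canL a ks i) (canl a ks i) = gfun a (sum_list (take i ks))"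
    unfolding canL_def canl_def using g0 o g1 by (auto intro: c_idr)
  show "cmp (canR a ks i) (canr a ks i) = gfun a (sum_list (take (Suc i) ks))"
    unfolding canR_def canr_def using gn o g2 lastS by (auto intro: c_idr)
  show "canl a ks i \<in> arr" unfolding canl_def using cs g1 by (auto intro: c_id c_dom_obj)
  show "cd (canl a ks i) = dm (canL a ks i)" unfolding canl_def canL_def using cs g1 o by (auto simp: c_dom_obj)
  show "canr a ks i \<in> arr" unfolding canr_def using cs g2 by (auto intro: c_id c_dom_obj)
  show "cd (canr a ks i) = dm (canR a ks i)" unfolding canr_def canR_def using cs g2 o by (auto simp: c_dom_obj)
qed

lemma can_cell:
  assumes a: "a \<in> cospan_cells E" and ks: "sum_list ks = length (cc_ins a)" and i: "i < length ks"
  shows "can a ks i \<in> cospan_cells E"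
proof -
  have T: "ctyp a" and Q: "ceqs a (gfun a)" using cell_elim[OF a] by auto
  define S where "S = sum_list (take i ks)"
  have SS: "sum_list (take (Suc i) ks) = S + ks!i" unfolding S_def using sum_take_Suc[OF i] .
  have le: "S + ks!i \<le> length (cc_ins a)" using sum_take_Suc_le[OF i] ks unfolding S_def by simp
  have lins: "length (cc_ins (can a ks i)) = ks!i" unfolding can_def S_def[symmetric] using le by simp
  have ins: "\<And>j. j < ks!i \<Longrightarrow> cc_ins (can a ks i) ! j = cc_ins a ! (S + j)"
    unfolding can_def S_def[symmetric] using le by simp
  have legs: "\<And>j. j < ks!i \<Longrightarrow> cc_legs (can a ks i) ! j = cc_legs a ! (S + j)"
    unfolding can_def S_def[symmetric] using le T unfolding ctyp_def by simp
  have llegs: "length (cc_legs (can a ks i)) = ks!i"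
    unfolding can_def S_def[symmetric] using le T unfolding ctyp_def by simp
  note F = can_facts[OF a ks i]
  have "ctyp (can a ks i)"
    unfolding ctyp_def
  proof (intro conjI allI impI)
    show "set (cc_ins (can a ks i)) \<subseteq> cospans E" using T unfolding ctyp_def can_def
      by (auto dest: in_set_takeD in_set_dropD)
    show "cc_out (can a ks i) \<in> cospans E" using F by (simp add: can_def cospansI)
    show "length (cc_legs (can a ks i)) = length (cc_ins (can a ks i))" using lins llegs by simp
    fix j assume j: "j < length (cc_ins (can a ks i))"
    then have j': "j < ks!i" "S + j < length (cc_ins a)" using lins le by auto
    show "cc_legs (can a ks i) ! j \<in> arr" using T j' legs unfolding ctyp_def by simp
    show "dm (cc_legs (can a ks i) ! j) = cd (fst (cc_ins (can a ks i) ! j))"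
      using T j' legs ins unfolding ctyp_def by simp
    show "cd (cc_legs (can a ks i) ! j) = cd (fst (cc_out (can a ks i)))"
      using T j' legs F unfolding ctyp_def by (simp add: can_def)
  qed (use F in \<open>simp_all add: can_def\<close>)
  moreover have "ceqs (can a ks i) (\<lambda>j. gfun a (S + j))"
    unfolding ceqs_def
  proof (intro conjI allI impI)
    show "gfun a (S + 0) = cmp (fst (cc_out (can a ks i))) (cc_left (can a ks i))"
      using F by (simp add: can_def S_def)
    show "gfun a (S + length (cc_ins (can a ks i))) = cmp (snd (cc_out (can a ks i))) (cc_right (can a ks i))"
      using F lins SS by (simp add: can_def)
    fix j assume j: "j < length (cc_ins (can a ks i))"
    then have j': "j < ks!i" "S + j < length (cc_ins a)" using lins le by auto
    show "cmp (cc_legs (can a ks i) ! j) (fst (cc_ins (can a ks i) ! j)) = gfun a (S + j)"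
      using Q j' legs ins unfolding ceqs_def by simp
    show "cmp (cc_legs (can a ks i) ! j) (snd (cc_ins (can a ks i) ! j)) = gfun a (S + Suc j)"
      using Q j' legs ins unfolding ceqs_def by simp
  qed
  ultimately show ?thesis by (rule cell_intro)
qed

lemma bcan_cell:
  assumes a: "a \<in> cospan_cells E" and ks: "sum_list ks = length (cc_ins a)" and ne: "ks \<noteq> []"
  shows "bcan a ks \<in> cospan_cells E"
proof -
  have T: "ctyp a" and Q: "ceqs a (gfun a)" using cell_elim[OF a] by auto
  obtain d0 d1 where o: "cc_out a = (d0, d1)" by (cases "cc_out a") auto
  have d: "d0 \<in> arr" "d1 \<in> arr" "cd d0 = cd d1" using T o unfolding ctyp_def by (auto dest: cospansD)
  have cs: "cc_left a \<in> arr" "cc_right a \<in> arr" "cd (cc_left a) = dm d0" "cd (cc_right a) = dm d1"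
    using T o unfolding ctyp_def by auto
  have ob[simp]: "dm d0 \<in> cat_obj E" "dm d1 \<in> cat_obj E" "cd d0 \<in> cat_obj E"
    using d c_dom_obj c_cod_obj by auto
  define m where "m = length ks"
  have m: "m > 0" using ne unfolding m_def by simp
  note F = can_facts[OF a ks]
  have w: "idt (cd d0) \<in> arr" using d by (auto intro: c_id c_cod_obj)
  have "ctyp (bcan a ks)"
    unfolding ctyp_def
  proof (intro conjI allI impI)
    show "set (cc_ins (bcan a ks)) \<subseteq> cospans E" using F by (auto simp: bcan_def intro!: cospansI)
    show "cc_out (bcan a ks) \<in> cospans E" using T unfolding ctyp_def by (simp add: bcan_def)
    show "cc_left (bcan a ks) \<in> arr" using cs by (simp add: bcan_def) (metis c_id c_cod_obj)
    show "cc_right (bcan a ks) \<in> arr" using cs by (simp add: bcan_def) (metis c_id c_cod_obj)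
    show "cd (cc_left (bcan a ks)) = dm (fst (cc_out (bcan a ks)))" using cs o by (simp add: bcan_def c_cod_obj)
    show "cd (cc_right (bcan a ks)) = dm (snd (cc_out (bcan a ks)))" using cs o by (simp add: bcan_def c_cod_obj)
    show "length (cc_legs (bcan a ks)) = length (cc_ins (bcan a ks))" by (simp add: bcan_def)
    fix j assume j: "j < length (cc_ins (bcan a ks))"
    then have j': "j < length ks" by (simp add: bcan_def)
    show "cc_legs (bcan a ks) ! j \<in> arr" using w j' o by (simp add: bcan_def)
    show "dm (cc_legs (bcan a ks) ! j) = cd (fst (cc_ins (bcan a ks) ! j))"
      using F(1)[OF j'] j' d o by (simp add: bcan_def c_cod_obj)
    show "cd (cc_legs (bcan a ks) ! j) = cd (fst (cc_out (bcan a ks)))"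
      using j' d o by (simp add: bcan_def c_cod_obj)
  qed
  moreover have "ceqs (bcan a ks) (\<lambda>j. if j < m then canL a ks j else d1)"
    unfolding ceqs_def
  proof (intro conjI allI impI)
    show "(if 0 < m then canL a ks 0 else d1) = cmp (fst (cc_out (bcan a ks))) (cc_left (bcan a ks))"
      using m o cs d by (simp add: bcan_def canL_def c_idr)
    show "(if length (cc_ins (bcan a ks)) < m then canL a ks (length (cc_ins (bcan a ks))) else d1)
        = cmp (snd (cc_out (bcan a ks))) (cc_right (bcan a ks))"
      using m o cs d by (simp add: bcan_def m_def c_idr)
    fix j assume j: "j < length (cc_ins (bcan a ks))"
    then have j': "j < length ks" by (simp add: bcan_def)
    show "cmp (cc_legs (bcan a ks) ! j) (fst (cc_ins (bcan a ks) ! j)) = (if j < m then canL a ks j else d1)"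
      using j' F(1)[OF j'] o by (simp add: bcan_def m_def c_idl)
    show "cmp (cc_legs (bcan a ks) ! j) (snd (cc_ins (bcan a ks) ! j)) = (if Suc j < m then canL a ks (Suc j) else d1)"
    proof (cases "Suc j < length ks")
      case True
      then show ?thesis using j' F(2)[OF j'] o by (simp add: bcan_def m_def c_idl canR_def canL_def)
    next
      case False
      then have "Suc j = length ks" using j' by simp
      then show ?thesis using j' F(2)[OF j'] o d by (simp add: bcan_def m_def c_idl canR_def canL_def)
    qed
  qed
  ultimately show ?thesis by (rule cell_intro)
qed

lemma legs_id:
  assumes a: "a \<in> cospan_cells E" and x: "x \<in> set (cc_legs a)"
  shows "cmp (idt (cd (fst (cc_out a)))) x = x"
proof -
  have T: "ctyp a" using cell_elim[OF a] by auto
  obtain j where j: "j < length (cc_legs a)" "x = cc_legs a ! j" using x by (auto simp: in_set_conv_nth)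
  have "x \<in> arr" "cd x = cd (fst (cc_out a))" using T j unfolding ctyp_def by auto
  then show ?thesis by (simp add: c_idl)
qed

lemma can_comp:
  assumes a: "a \<in> cospan_cells E" and ks: "sum_list ks = length (cc_ins a)" and ne: "ks \<noteq> []"
  shows "cospan_ccomp E (map (can a ks) [0..<length ks]) (bcan a ks) = a"
proof -
  have T: "ctyp a" using cell_elim[OF a] by auto
  define m where "m = length ks"
  have m: "m > 0" using ne unfolding m_def by simp
  have ne2: "map (can a ks) [0..<m] \<noteq> []" using m by simp
  have hd: "hd (map (can a ks) [0..<m]) = can a ks 0" using m by (simp add: hd_map)
  have lst: "last (map (can a ks) [0..<m]) = can a ks (m - 1)" using m by (simp add: last_map)
  have lens: "length (cc_legs a) = length (cc_ins a)" using T unfolding ctyp_def by simp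
  have l: "cc_left (cospan_ccomp E (map (can a ks) [0..<m]) (bcan a ks)) = cc_left a"
    using ne2 hd T unfolding ctyp_def by (simp add: cospan_ccomp_def can_def canl_def bcan_def c_idl)
  have r: "cc_right (cospan_ccomp E (map (can a ks) [0..<m]) (bcan a ks)) = cc_right a"
    using ne2 lst m T unfolding ctyp_def by (simp add: cospan_ccomp_def can_def canr_def bcan_def c_idl m_def)
  have i: "cc_ins (cospan_ccomp E (map (can a ks) [0..<m]) (bcan a ks)) = cc_ins a"
    using concat_blocks[of ks "cc_ins a"] ks by (simp add: cospan_ccomp_def can_def m_def o_def)
  have "map2 (\<lambda>x f. map (cmp f) (cc_legs x)) (map (can a ks) [0..<m]) (cc_legs (bcan a ks))
      = map (\<lambda>i. take (ks!i) (drop (sum_list (take i ks)) (cc_legs a))) [0..<m]"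
  proof -
    have "map2 (\<lambda>x f. map (cmp f) (cc_legs x)) (map (can a ks) [0..<m]) (cc_legs (bcan a ks))
      = map (\<lambda>i. map (cmp (idt (cd (fst (cc_out a))))) (take (ks!i) (drop (sum_list (take i ks)) (cc_legs a)))) [0..<m]"
      by (simp add: bcan_def m_def zip_replicate2 can_def)
    also have "\<dots> = map (\<lambda>i. take (ks!i) (drop (sum_list (take i ks)) (cc_legs a))) [0..<m]"
      by (intro map_cong refl map_idI legs_id[OF a]) (auto dest: in_set_takeD in_set_dropD)
    finally show ?thesis .
  qed
  then have g: "cc_legs (cospan_ccomp E (map (can a ks) [0..<m]) (bcan a ks)) = cc_legs a"
    using concat_blocks[of ks "cc_legs a"] ks lens by (simp add: cospan_ccomp_def m_def)
  have o: "cc_out (cospan_ccomp E (map (can a ks) [0..<m]) (bcan a ks)) = cc_out a"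
    by (simp add: cospan_ccomp_def bcan_def)
  show ?thesis using l r i g o unfolding m_def by (intro cospan_cell.equality) simp_all
qed

lemma can_decomp:
  assumes a: "a \<in> cospan_cells E" and ks: "sum_list ks = length (cc_ins a)" and ne: "ks \<noteq> []"
  shows "is_gdecomp (Cospan E) a ks (map (can a ks) [0..<length ks], bcan a ks)"
proof -
  have T: "ctyp a" using cell_elim[OF a] by auto
  have lins: "\<And>i. i < length ks \<Longrightarrow> length (cc_ins (can a ks i)) = ks!i"
    using sum_take_Suc_le ks by (fastforce simp: can_def)
  have comp: "composable (Cospan E) (map (can a ks) [0..<length ks]) (bcan a ks)"
    unfolding composable_def
    by (auto simp: bcan_def can_def canr_def canl_def)
  have glob: "globular (Cospan E) (bcan a ks)"
  proof -
    have "dm (fst (cc_out a)) \<in> cat_obj E" "dm (snd (cc_out a)) \<in> cat_obj E"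
      using T unfolding ctyp_def by (auto dest!: cospansD intro: c_dom_obj)
    then show ?thesis using T unfolding globular_def ctyp_def by (auto simp: bcan_def)
  qed
  show ?thesis unfolding is_gdecomp_def arity_def
    using bcan_cell[OF a ks ne] can_cell[OF a ks] comp glob lins can_comp[OF a ks ne]
    by (auto simp: bcan_def)
qed

definition sig where "sig x f =
  \<lparr> cc_ins = [cc_out x], cc_out = (cmp f (fst (cc_out x)), cmp f (snd (cc_out x))),
    cc_left = idt (dm (fst (cc_out x))), cc_right = idt (dm (snd (cc_out x))), cc_legs = [f] \<rparr>"

lemma sig_cell:
  assumes o: "cc_out x \<in> cospans E" and f: "f \<in> arr" "dm f = cd (fst (cc_out x))"
  shows "sig x f \<in> cospan_cells E"
proof -
  obtain P Q where pq: "cc_out x = (P, Q)" by (cases "cc_out x") auto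
  have P: "P \<in> arr" "Q \<in> arr" "cd P = cd Q" using o pq by (auto dest: cospansD)
  have ob[simp]: "dm P \<in> cat_obj E" "dm Q \<in> cat_obj E" using P c_dom_obj by auto
  have "ctyp (sig x f)" unfolding ctyp_def sig_def using o P f pq
    by (auto intro!: cospansI c_comp c_id)
  moreover have "ceqs (sig x f) (\<lambda>j. if j = 0 then cmp f P else cmp f Q)"
  proof -
    have "dm (cmp f P) = dm P" "dm (cmp f Q) = dm Q" "cmp f P \<in> arr" "cmp f Q \<in> arr"
      using P f pq by (auto intro: c_comp)
    then show ?thesis unfolding ceqs_def sig_def using P f pq by (auto simp: c_idr)
  qed
  ultimately show ?thesis by (rule cell_intro)
qed

lemma whisk_eq:
  assumes x: "x \<in> cospan_cells E" and f: "f \<in> arr" "dm f = cd (fst (cc_out x))"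
  shows "cospan_ccomp E [x] (sig x f) =
    \<lparr> cc_ins = cc_ins x, cc_out = (cmp f (fst (cc_out x)), cmp f (snd (cc_out x))),
      cc_left = cc_left x, cc_right = cc_right x, cc_legs = map (cmp f) (cc_legs x) \<rparr>"
proof -
  have T: "ctyp x" using cell_elim[OF x] by auto
  show ?thesis using T unfolding ctyp_def cospan_ccomp_def sig_def by (simp add: c_idl)
qed

lemma whisk_cell:
  assumes x: "x \<in> cospan_cells E" and f: "f \<in> arr" "dm f = cd (fst (cc_out x))"
  shows "cospan_ccomp E [x] (sig x f) \<in> cospan_cells E"
proof -
  have T: "ctyp x" and Q: "ceqs x (gfun x)" using cell_elim[OF x] by auto
  obtain P Q where pq: "cc_out x = (P, Q)" by (cases "cc_out x") auto
  have P: "P \<in> arr" "Q \<in> arr" "cd P = cd Q" using T pq unfolding ctyp_def by (auto dest: cospansD)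
  have ins: "\<And>j. j < length (cc_ins x) \<Longrightarrow> fst (cc_ins x ! j) \<in> arr \<and> snd (cc_ins x ! j) \<in> arr \<and>
      cd (fst (cc_ins x ! j)) = cd (snd (cc_ins x ! j))"
    using T unfolding ctyp_def by (meson cospansD nth_mem subsetD)
  have "ctyp (cospan_ccomp E [x] (sig x f))" unfolding whisk_eq[OF x f]
    using T P f pq unfolding ctyp_def by (auto intro!: cospansI c_comp)
  moreover have "ceqs (cospan_ccomp E [x] (sig x f)) (\<lambda>j. cmp f (gfun x j))"
  proof -
    have L: "cc_left x \<in> arr" "cd (cc_left x) = dm P" "cc_right x \<in> arr" "cd (cc_right x) = dm Q"
      using T pq unfolding ctyp_def by auto
    have fP: "cd P = dm f" "cd Q = dm f" using f P pq by auto
    have g0: "gfun x 0 = cmp P (cc_left x)" "gfun x (length (cc_ins x)) = cmp Q (cc_right x)"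
      using Q pq unfolding ceqs_def by auto
    have A1: "cmp f (gfun x 0) = cmp (cmp f (fst (cc_out x))) (cc_left x)"
      using g0 c_assoc[OF L(1) P(1) f(1) L(2) fP(1)] pq by simp
    have A2: "cmp f (gfun x (length (cc_ins x))) = cmp (cmp f (snd (cc_out x))) (cc_right x)"
      using g0 c_assoc[OF L(3) P(2) f(1) L(4) fP(2)] pq by simp
    have A3: "cmp (cmp f (cc_legs x ! j)) (fst (cc_ins x ! j)) = cmp f (gfun x j) \<and> cmp (cmp f (cc_legs x ! j)) (snd (cc_ins x ! j)) = cmp f (gfun x (Suc j))" if j: "j < length (cc_ins x)" for j
    proof -
    have e: "cc_legs x ! j \<in> arr" "dm (cc_legs x ! j) = cd (fst (cc_ins x ! j))"
       "cd (cc_legs x ! j) = dm f"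
      using T j f pq unfolding ctyp_def by auto
    have gj: "cmp (cc_legs x ! j) (fst (cc_ins x ! j)) = gfun x j"
       "cmp (cc_legs x ! j) (snd (cc_ins x ! j)) = gfun x (Suc j)" using Q j unfolding ceqs_def by auto
    have i2: "cd (snd (cc_ins x ! j)) = dm (cc_legs x ! j)" using ins[OF j] e by simp
    have "cmp (cmp f (cc_legs x ! j)) (fst (cc_ins x ! j)) = cmp f (gfun x j)"
      using c_assoc[OF conjunct1[OF ins[OF j]] e(1) f(1) e(2)[symmetric] e(3)] gj by simp
    moreover have "cmp (cmp f (cc_legs x ! j)) (snd (cc_ins x ! j)) = cmp f (gfun x (Suc j))"
      using c_assoc[OF conjunct1[OF conjunct2[OF ins[OF j]]] e(1) f(1) i2 e(3)] gj by simp
    ultimately show ?thesis by simp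
    qed
    have ll: "length (cc_legs x) = length (cc_ins x)" using T unfolding ctyp_def by simp
    show ?thesis unfolding whisk_eq[OF x f] ceqs_def using A1 A2 A3 ll by simp
  qed
  ultimately show ?thesis by (rule cell_intro)
qed

context
  fixes a :: "'m cospan_cell" and ks :: "nat list" and as :: "'m cospan_cell list" and b :: "'m cospan_cell"
  assumes D: "is_gdecomp (Cospan E) a ks (as, b)" and ne: "ks \<noteq> []"
    and acell: "a \<in> cospan_cells E" and ksum: "sum_list ks = length (cc_ins a)"
begin

abbreviation "mm \<equiv> length ks"
definition "ff i = cc_legs b ! i"
definition "PP i = fst (cc_out (as!i))"
definition "QQ i = snd (cc_out (as!i))"
definition "ww = cd (fst (cc_out b))"

lemma D_facts:
  shows bcell: "b \<in> cospan_cells E" and ascell: "\<And>i. i < mm \<Longrightarrow> as!i \<in> cospan_cells E"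
    and las: "length as = mm" and linsb: "length (cc_ins b) = mm"
    and outas: "\<And>i. i < mm \<Longrightarrow> cc_out (as!i) = cc_ins b ! i"
    and rl: "\<And>i. Suc i < mm \<Longrightarrow> cc_right (as!i) = cc_left (as!Suc i)"
    and ar: "\<And>i. i < mm \<Longrightarrow> length (cc_ins (as!i)) = ks!i"
    and globl: "cc_left b = idt (dm (cc_left b))" and globr: "cc_right b = idt (dm (cc_right b))"
    and comp: "cospan_ccomp E as b = a"
  using D unfolding is_gdecomp_def composable_def globular_def arity_def by auto

lemma mpos: "mm > 0" using ne by simp

lemma b_facts:
  assumes i: "i < mm"
  shows "ff i \<in> arr" "dm (ff i) = cd (PP i)" "cd (ff i) = ww" "PP i \<in> arr" "QQ i \<in> arr" "cd (PP i) = cd (QQ i)"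
    "gfun b i = cmp (ff i) (PP i)" "gfun b (Suc i) = cmp (ff i) (QQ i)"
proof -
  have T: "ctyp b" and Q: "ceqs b (gfun b)" using cell_elim[OF bcell] by auto
  have o: "cc_out (as!i) = cc_ins b ! i" using outas[OF i] .
  have c: "cc_ins b ! i \<in> cospans E" using T i linsb unfolding ctyp_def by auto
  show "ff i \<in> arr" "dm (ff i) = cd (PP i)" "cd (ff i) = ww"
    using T i linsb o unfolding ctyp_def ff_def PP_def ww_def by auto
  show "PP i \<in> arr" "QQ i \<in> arr" "cd (PP i) = cd (QQ i)"
    using cospansD[OF c] o unfolding PP_def QQ_def by auto
  show "gfun b i = cmp (ff i) (PP i)" "gfun b (Suc i) = cmp (ff i) (QQ i)"
    using Q i linsb o unfolding ceqs_def ff_def PP_def QQ_def by auto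
qed

lemma b_ends:
  shows "cmp (ff 0) (PP 0) = fst (cc_out b)" "cmp (ff (mm - 1)) (QQ (mm - 1)) = snd (cc_out b)"
    "dm (PP 0) = cd (cc_left b)" "dm (QQ (mm - 1)) = cd (cc_right b)"
    "cc_left b = idt (cd (cc_left b))" "cc_right b = idt (cd (cc_right b))"
proof -
  have T: "ctyp b" and Q: "ceqs b (gfun b)" using cell_elim[OF bcell] by auto
  obtain d0 d1 where o: "cc_out b = (d0, d1)" by (cases "cc_out b") auto
  have d: "d0 \<in> arr" "d1 \<in> arr" using T o unfolding ctyp_def by (auto dest: cospansD)
  have L: "cc_left b \<in> arr" "cd (cc_left b) = dm d0" "cc_right b \<in> arr" "cd (cc_right b) = dm d1"
    using T o unfolding ctyp_def by auto
  have ol: "dm (cc_left b) \<in> cat_obj E" "dm (cc_right b) \<in> cat_obj E" using L c_dom_obj by auto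
  have idl: "cd (cc_left b) = dm (cc_left b)" using ol globl by (metis c_id_cod)
  have idr: "cd (cc_right b) = dm (cc_right b)" using ol globr by (metis c_id_cod)
  show el: "cc_left b = idt (cd (cc_left b))" "cc_right b = idt (cd (cc_right b))"
    using idl idr globl globr by simp_all
  have g0: "gfun b 0 = d0" using Q o unfolding ceqs_def using c_idr[OF d(1)] L idl el by (metis fst_conv)
  have gm: "gfun b mm = d1" using Q o linsb unfolding ceqs_def using c_idr[OF d(2)] L idr el by (metis snd_conv)
  have m1: "mm - 1 < mm" "Suc (mm - 1) = mm" using mpos by auto
  show e1: "cmp (ff 0) (PP 0) = fst (cc_out b)" using b_facts(7)[OF mpos] g0 o by simp
  show e2: "cmp (ff (mm - 1)) (QQ (mm - 1)) = snd (cc_out b)" using b_facts(8)[OF m1(1)] gm o m1 by simp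
  show "dm (PP 0) = cd (cc_left b)"
    using e1 b_facts(1,2,4)[OF mpos] o L by (metis c_comp_dom fst_conv)
  show "dm (QQ (mm - 1)) = cd (cc_right b)"
    using e2 b_facts(1,2,5,6)[OF m1(1)] o L by (metis c_comp_dom snd_conv)
qed

lemma lleg_b: "length (cc_legs b) = mm" using cell_elim(1)[OF bcell] linsb unfolding ctyp_def by simp

lemma lleg_as: "i < mm \<Longrightarrow> length (cc_legs (as!i)) = ks!i"
  using cell_elim(1)[OF ascell] ar unfolding ctyp_def by simp

lemma a_fields:
  shows "cc_ins a = concat (map cc_ins as)" "cc_out a = cc_out b"
    "cc_legs a = concat (map2 (\<lambda>x f. map (cmp f) (cc_legs x)) as (cc_legs b))"
    "cc_left a = cc_left (as!0)" "cc_right a = cc_right (as!(mm-1))"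
proof -
  have ne': "as \<noteq> []" using las mpos by auto
  show "cc_ins a = concat (map cc_ins as)" "cc_out a = cc_out b"
    "cc_legs a = concat (map2 (\<lambda>x f. map (cmp f) (cc_legs x)) as (cc_legs b))"
    using comp[symmetric] by (simp_all add: cospan_ccomp_def)
  have m1: "mm - 1 < mm" using mpos by auto
  have T0: "ctyp (as!0)" using cell_elim(1)[OF ascell[OF mpos]] .
  have T1: "ctyp (as!(mm-1))" using cell_elim(1)[OF ascell[OF m1]] .
  have "cc_left a = cmp (cc_left b) (cc_left (as!0))"
    using comp[symmetric] ne' by (simp add: cospan_ccomp_def hd_conv_nth)
  also have "\<dots> = cc_left (as!0)"
    using T0 b_ends(3,5) unfolding ctyp_def PP_def by (metis c_idl)
  finally show "cc_left a = cc_left (as!0)" .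
  have "cc_right a = cmp (cc_right b) (cc_right (as!(mm-1)))"
    using comp[symmetric] ne' las by (simp add: cospan_ccomp_def last_conv_nth)
  also have "\<dots> = cc_right (as!(mm-1))"
    using T1 b_ends(4,6) unfolding ctyp_def QQ_def by (metis c_idl)
  finally show "cc_right a = cc_right (as!(mm-1))" .
qed

lemma a_block:
  assumes i: "i < mm" and j: "j < ks!i"
  shows "cc_ins a ! (sum_list (take i ks) + j) = cc_ins (as!i) ! j"
    "cc_legs a ! (sum_list (take i ks) + j) = cmp (ff i) (cc_legs (as!i) ! j)"
proof -
  show "cc_ins a ! (sum_list (take i ks) + j) = cc_ins (as!i) ! j"
    unfolding a_fields(1)
    by (subst concat_block_nth[of _ ks]) (use i j las ar in auto)
  have "cc_legs a ! (sum_list (take i ks) + j) =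
     (map2 (\<lambda>x f. map (cmp f) (cc_legs x)) as (cc_legs b)) ! i ! j"
    unfolding a_fields(3)
    by (rule concat_block_nth) (use i j las lleg_b lleg_as in auto)
  also have "\<dots> = cmp (ff i) (cc_legs (as!i) ! j)"
    using i j las lleg_b lleg_as by (simp add: ff_def)
  finally show "cc_legs a ! (sum_list (take i ks) + j) = cmp (ff i) (cc_legs (as!i) ! j)" .
qed

lemma as_facts:
  assumes i: "i < mm"
  shows "cc_left (as!i) \<in> arr" "cd (cc_left (as!i)) = dm (PP i)"
    "cc_right (as!i) \<in> arr" "cd (cc_right (as!i)) = dm (QQ i)"
    "gfun (as!i) 0 = cmp (PP i) (cc_left (as!i))"
    "gfun (as!i) (ks!i) = cmp (QQ i) (cc_right (as!i))"
  using cell_elim[OF ascell[OF i]] ar[OF i] unfolding ctyp_def ceqs_def PP_def QQ_def by auto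

lemma assoc3:
  assumes i: "i < mm" and x: "x \<in> arr" "cd x = dm (PP i)"
  shows "cmp (ff i) (cmp (PP i) x) = cmp (cmp (ff i) (PP i)) x"
  using c_assoc[OF x(1) b_facts(4)[OF i] b_facts(1)[OF i] x(2) b_facts(2)[OF i, symmetric]] .

lemma assoc3Q:
  assumes i: "i < mm" and x: "x \<in> arr" "cd x = dm (QQ i)"
  shows "cmp (ff i) (cmp (QQ i) x) = cmp (cmp (ff i) (QQ i)) x"
  using c_assoc[OF x(1) b_facts(5)[OF i] b_facts(1)[OF i] x(2)] b_facts(2,6)[OF i] by simp

lemma bound_pos:
  assumes i: "i < mm" and j: "0 < j" "j \<le> ks!i"
  shows "gfun a (sum_list (take i ks) + j) = cmp (ff i) (gfun (as!i) j)"
proof -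
  define S where "S = sum_list (take i ks)"
  have j1: "j - 1 < ks!i" using j by auto
  have idx: "S + j - 1 = S + (j - 1)" using j by simp
  have Ti: "ctyp (as!i)" using cell_elim(1)[OF ascell[OF i]] .
  define e where "e = cc_legs (as!i) ! (j-1)"
  define sn where "sn = snd (cc_ins (as!i) ! (j-1))"
  have jl: "j - 1 < length (cc_ins (as!i))" using j1 ar[OF i] by simp
  have e: "e \<in> arr" "dm e = cd (fst (cc_ins (as!i) ! (j-1)))" "cd e = dm (ff i)"
    using Ti jl b_facts(2)[OF i] unfolding ctyp_def e_def PP_def by auto
  have c: "cc_ins (as!i) ! (j-1) \<in> cospans E" using Ti jl unfolding ctyp_def by auto
  have sn: "sn \<in> arr" "cd sn = dm e" using cospansD[OF c] e unfolding sn_def by auto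
  have "gfun a (S + j) = cmp (cc_legs a ! (S + (j - 1))) (snd (cc_ins a ! (S + (j - 1))))"
    unfolding gfun_def using j idx by simp
  also have "\<dots> = cmp (cmp (ff i) e) sn" using a_block[OF i j1] unfolding e_def sn_def S_def by simp
  also have "\<dots> = cmp (ff i) (cmp e sn)" using c_assoc[OF sn(1) e(1) b_facts(1)[OF i] sn(2) e(3)] by simp
  also have "cmp e sn = gfun (as!i) j" unfolding gfun_def e_def sn_def using j by simp
  finally show ?thesis unfolding S_def .
qed

lemma bound0: "i < mm \<Longrightarrow> gfun a (sum_list (take i ks)) = cmp (ff i) (gfun (as!i) 0)"
proof (induction i)
  case 0
  have "gfun a 0 = cmp (fst (cc_out b)) (cc_left (as!0))" unfolding gfun_def using a_fields by simp
  also have "\<dots> = cmp (cmp (ff 0) (PP 0)) (cc_left (as!0))" using b_ends(1) by simp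
  also have "\<dots> = cmp (ff 0) (gfun (as!0) 0)"
    using assoc3[OF mpos as_facts(1,2)[OF mpos]] as_facts(5)[OF mpos] by simp
  finally show ?case by simp
next
  case (Suc i)
  have i: "i < mm" using Suc.prems by simp
  have R: "gfun a (sum_list (take i ks) + ks!i) = cmp (ff i) (gfun (as!i) (ks!i))"
  proof (cases "ks!i = 0")
    case True then show ?thesis using Suc.IH[OF i] by simp
  next
    case False then show ?thesis using bound_pos[OF i] by simp
  qed
  have "gfun a (sum_list (take (Suc i) ks)) = gfun a (sum_list (take i ks) + ks!i)"
    using sum_take_Suc[OF i] by simp
  also have "\<dots> = cmp (ff i) (cmp (QQ i) (cc_right (as!i)))" using R as_facts(6)[OF i] by simp
  also have "\<dots> = cmp (cmp (ff i) (QQ i)) (cc_right (as!i))" using assoc3Q[OF i as_facts(3,4)[OF i]] .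
  also have "\<dots> = cmp (cmp (ff (Suc i)) (PP (Suc i))) (cc_left (as!Suc i))"
    using b_facts(7)[OF Suc.prems] b_facts(8)[OF i] rl[OF Suc.prems] by simp
  also have "\<dots> = cmp (ff (Suc i)) (gfun (as!Suc i) 0)"
    using assoc3[OF Suc.prems as_facts(1,2)[OF Suc.prems]] as_facts(5)[OF Suc.prems] by simp
  finally show ?case .
qed

lemma bound:
  assumes i: "i < mm" and j: "j \<le> ks!i"
  shows "gfun a (sum_list (take i ks) + j) = cmp (ff i) (gfun (as!i) j)"
  using bound0[OF i] bound_pos[OF i _ j] by (cases "j = 0") auto

definition "ssl = map (\<lambda>i. sig (as!i) (ff i)) [0..<mm]"
definition "asx = map2 (\<lambda>x s. cospan_ccomp E [x] s) as ssl"
definition "bx = \<lparr> cc_ins = map (\<lambda>i. cc_out (sig (as!i) (ff i))) [0..<mm], cc_out = cc_out b,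
    cc_left = cc_left b, cc_right = cc_right b, cc_legs = replicate mm (idt ww) \<rparr>"

lemma ff_ok: "i < mm \<Longrightarrow> ff i \<in> arr \<and> dm (ff i) = cd (fst (cc_out (as!i)))"
  using b_facts(1,2) unfolding PP_def by auto

lemma asx_nth: "i < mm \<Longrightarrow> asx!i =
    \<lparr> cc_ins = cc_ins (as!i), cc_out = (cmp (ff i) (PP i), cmp (ff i) (QQ i)),
      cc_left = cc_left (as!i), cc_right = cc_right (as!i), cc_legs = map (cmp (ff i)) (cc_legs (as!i)) \<rparr>"
  using whisk_eq[OF ascell conjunct1[OF ff_ok] conjunct2[OF ff_ok]] las
  unfolding asx_def ssl_def PP_def QQ_def by simp

lemma asx_cell: "i < mm \<Longrightarrow> asx!i \<in> cospan_cells E"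
  using whisk_cell[OF ascell conjunct1[OF ff_ok] conjunct2[OF ff_ok]] las
  unfolding asx_def ssl_def by simp

lemma sig_ok: "i < mm \<Longrightarrow> sig (as!i) (ff i) \<in> cospan_cells E"
  using sig_cell[OF _ conjunct1[OF ff_ok] conjunct2[OF ff_ok]] cell_elim(1)[OF ascell] unfolding ctyp_def
  by blast

lemma dmQP: "Suc i < mm \<Longrightarrow> dm (QQ i) = dm (PP (Suc i))"
proof -
  assume si: "Suc i < mm"
  then have i: "i < mm" by simp
  have "cmp (ff i) (QQ i) = cmp (ff (Suc i)) (PP (Suc i))" using b_facts(8)[OF i] b_facts(7)[OF si] by simp
  then show ?thesis using b_facts[OF i] b_facts[OF si] by (metis c_comp_dom)
qed

lemma objP: "i < mm \<Longrightarrow> dm (PP i) \<in> cat_obj E \<and> dm (QQ i) \<in> cat_obj E"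
  using b_facts(4,5) c_dom_obj by auto

lemma step1: "gd_step (Cospan E) (asx, bx) (as, b)"
proof -
  have m1: "mm - 1 < mm" "Suc (mm - 1) = mm" using mpos by auto
  have hd: "hd ssl = sig (as!0) (ff 0)" using mpos unfolding ssl_def by (simp add: hd_map)
  have lst: "last ssl = sig (as!(mm-1)) (ff (mm-1))" using mpos unfolding ssl_def by (simp add: last_map)
  have beq: "b = cospan_ccomp E ssl bx"
  proof (rule cospan_cell.equality)
    show "cc_ins b = cc_ins (cospan_ccomp E ssl bx)"
      by (rule nth_equalityI) (auto simp: cospan_ccomp_def ssl_def sig_def linsb outas comp_def o_def)
    show "cc_out b = cc_out (cospan_ccomp E ssl bx)" by (simp add: cospan_ccomp_def bx_def)
    have ob: "cd (cc_left b) \<in> cat_obj E" "cd (cc_right b) \<in> cat_obj E"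
      using objP[OF mpos] objP[OF m1(1)] b_ends(3,4) by auto
    show "cc_left b = cc_left (cospan_ccomp E ssl bx)"
      using mpos hd b_ends(3,5) ob unfolding cospan_ccomp_def bx_def sig_def PP_def
      by (simp add: ssl_def) (metis c_id c_id_cod c_idl)
    show "cc_right b = cc_right (cospan_ccomp E ssl bx)"
      using mpos lst b_ends(4,6) ob unfolding cospan_ccomp_def bx_def sig_def QQ_def
      by (simp add: ssl_def) (metis c_id c_id_cod c_idl)
    have "map2 (\<lambda>x f. map (cmp f) (cc_legs x)) ssl (cc_legs bx) = map (\<lambda>i. [ff i]) [0..<mm]"
      unfolding ssl_def bx_def by (auto simp: zip_replicate2 sig_def b_facts(1,3) c_idl)
    then show "cc_legs b = cc_legs (cospan_ccomp E ssl bx)"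
      by (simp add: cospan_ccomp_def) (rule nth_equalityI, simp_all add: lleg_b ff_def)
  qed simp
  show ?thesis unfolding gd_step_def
  proof (intro exI conjI allI impI)
    show "(asx, bx) = (map2 (\<lambda>x s. vccomp (Cospan E) [x] s) as ssl, bx)" by (simp add: asx_def)
    show "(as, b) = (as, vccomp (Cospan E) ssl bx)" using beq by simp
    show "ssl \<noteq> []" using mpos by (simp add: ssl_def)
    show "length ssl = length as" using las by (simp add: ssl_def)
    show "set ssl \<subseteq> vcell (Cospan E)" using sig_ok by (auto simp: ssl_def)
    fix i assume i: "i < length ssl"
    then have i': "i < mm" by (simp add: ssl_def)
    show "arity (Cospan E) (ssl ! i) = 1" using i' by (simp add: arity_def ssl_def sig_def)
    show "composable (Cospan E) [as ! i] (ssl ! i)" using i' by (simp add: composable_def ssl_def sig_def)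
  next
    show "composable (Cospan E) ssl bx" unfolding composable_def
      using dmQP by (auto simp: ssl_def bx_def sig_def PP_def QQ_def)
    show "vcleft (Cospan E) (hd ssl) = tid (Cospan E) (tdom (Cospan E) (vcleft (Cospan E) (hd ssl)))"
      using hd objP[OF mpos] by (simp add: sig_def PP_def)
    show "vcright (Cospan E) (last ssl) = tid (Cospan E) (tdom (Cospan E) (vcright (Cospan E) (last ssl)))"
      using lst objP[OF m1(1)] by (simp add: sig_def QQ_def)
  qed
qed

lemma ww_obj: "ww \<in> cat_obj E" using b_facts(1,3)[OF mpos] c_cod_obj by metis

lemma bx_cell: "bx \<in> cospan_cells E"
proof -
  have T: "ctyp b" and Q: "ceqs b (gfun b)" using cell_elim[OF bcell] by auto
  have cmpPQ: "\<And>i. i < mm \<Longrightarrow> cmp (ff i) (PP i) \<in> arr \<and> cd (cmp (ff i) (PP i)) = ww \<and>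
      cmp (ff i) (QQ i) \<in> arr \<and> cd (cmp (ff i) (QQ i)) = ww"
    using b_facts by (auto intro: c_comp)
  have "ctyp bx" unfolding ctyp_def
  proof (intro conjI allI impI)
    show "set (cc_ins bx) \<subseteq> cospans E"
      using cmpPQ by (auto simp: bx_def sig_def PP_def QQ_def intro!: cospansI)
    show "length (cc_legs bx) = length (cc_ins bx)" by (simp add: bx_def)
    fix j assume j: "j < length (cc_ins bx)"
    then have j': "j < mm" by (simp add: bx_def)
    show "cc_legs bx ! j \<in> arr" using j' ww_obj c_id by (simp add: bx_def)
    show "dm (cc_legs bx ! j) = cd (fst (cc_ins bx ! j))"
      using j' ww_obj cmpPQ[OF j'] by (simp add: bx_def sig_def PP_def)
    show "cd (cc_legs bx ! j) = cd (fst (cc_out bx))"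
      using j' ww_obj by (simp add: bx_def ww_def)
  qed (use T in \<open>simp_all add: ctyp_def bx_def\<close>)
  moreover have "ceqs bx (gfun b)" unfolding ceqs_def
  proof (intro conjI allI impI)
    show "gfun b 0 = cmp (fst (cc_out bx)) (cc_left bx)" using Q by (simp add: ceqs_def bx_def)
    show "gfun b (length (cc_ins bx)) = cmp (snd (cc_out bx)) (cc_right bx)"
      using Q linsb by (simp add: ceqs_def bx_def)
    fix j assume j: "j < length (cc_ins bx)"
    then have j': "j < mm" by (simp add: bx_def)
    show "cmp (cc_legs bx ! j) (fst (cc_ins bx ! j)) = gfun b j"
      using j' cmpPQ[OF j'] b_facts(7)[OF j'] by (simp add: bx_def sig_def PP_def c_idl)
    show "cmp (cc_legs bx ! j) (snd (cc_ins bx ! j)) = gfun b (Suc j)"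
      using j' cmpPQ[OF j'] b_facts(8)[OF j'] by (simp add: bx_def sig_def QQ_def c_idl)
  qed
  ultimately show ?thesis by (rule cell_intro)
qed

lemma las_x: "length asx = mm" using las by (simp add: asx_def ssl_def)

lemma asx_decomp: "is_gdecomp (Cospan E) a ks (asx, bx)"
proof -
  have m1: "mm - 1 < mm" using mpos by auto
  have comp': "composable (Cospan E) asx bx" unfolding composable_def
    using las_x asx_nth rl by (auto simp: bx_def sig_def PP_def QQ_def)
  have glob: "globular (Cospan E) bx" using globl globr by (simp add: globular_def bx_def)
  have eq: "cospan_ccomp E asx bx = cospan_ccomp E as b"
  proof (rule cospan_cell.equality)
    have "map cc_ins asx = map cc_ins as" by (rule nth_equalityI) (simp_all add: las las_x asx_nth)
    then show "cc_ins (cospan_ccomp E asx bx) = cc_ins (cospan_ccomp E as b)" by (simp add: cospan_ccomp_def)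
    show "cc_out (cospan_ccomp E asx bx) = cc_out (cospan_ccomp E as b)" by (simp add: cospan_ccomp_def bx_def)
    have ne': "asx \<noteq> []" "as \<noteq> []" using las las_x mpos by auto
    show "cc_left (cospan_ccomp E asx bx) = cc_left (cospan_ccomp E as b)"
      using ne' asx_nth[OF mpos] by (simp add: cospan_ccomp_def bx_def hd_conv_nth)
    show "cc_right (cospan_ccomp E asx bx) = cc_right (cospan_ccomp E as b)"
      using ne' asx_nth[OF m1] las las_x by (simp add: cospan_ccomp_def bx_def last_conv_nth)
    have "map2 (\<lambda>x f. map (cmp f) (cc_legs x)) asx (cc_legs bx) = map2 (\<lambda>x f. map (cmp f) (cc_legs x)) as (cc_legs b)"
    proof (rule nth_equalityI)
      show "length (map2 (\<lambda>x f. map (cmp f) (cc_legs x)) asx (cc_legs bx)) =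
        length (map2 (\<lambda>x f. map (cmp f) (cc_legs x)) as (cc_legs b))" using las las_x lleg_b by (simp add: bx_def)
      fix i assume "i < length (map2 (\<lambda>x f. map (cmp f) (cc_legs x)) asx (cc_legs bx))"
      then have i: "i < mm" using las_x by (simp add: bx_def)
      have T: "ctyp (as!i)" using cell_elim(1)[OF ascell[OF i]] .
      have H: "cmp (idt ww) (cmp (ff i) e) = cmp (ff i) e" if eS: "e \<in> set (cc_legs (as!i))" for e
      proof -
        obtain j where j: "j < length (cc_legs (as!i))" "e = cc_legs (as!i) ! j" using eS unfolding in_set_conv_nth by blast
        have jl: "j < length (cc_ins (as!i))" using j T unfolding ctyp_def by simp
        have "cc_legs (as!i) ! j \<in> arr \<and> cd (cc_legs (as!i) ! j) = cd (PP i)"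
          using T jl unfolding ctyp_def PP_def by blast
        then have e: "e \<in> arr" "cd e = dm (ff i)" using j(2) b_facts(2)[OF i] by simp_all
        have "cmp (ff i) e \<in> arr" "cd (cmp (ff i) e) = ww"
          using c_comp[OF e(1) b_facts(1)[OF i] e(2)] c_comp_cod[OF e(1) b_facts(1)[OF i] e(2)] b_facts(3)[OF i] by simp_all
        then show "cmp (idt ww) (cmp (ff i) e) = cmp (ff i) e" by (simp add: c_idl)
      qed
      have "map (cmp (idt ww)) (map (cmp (ff i)) (cc_legs (as!i))) = map (cmp (ff i)) (cc_legs (as!i))"
        using H by simp
      then show "map2 (\<lambda>x f. map (cmp f) (cc_legs x)) asx (cc_legs bx) ! i =
        map2 (\<lambda>x f. map (cmp f) (cc_legs x)) as (cc_legs b) ! i"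
        using i las las_x lleg_b asx_nth[OF i] by (simp add: bx_def ff_def)
    qed
    then show "cc_legs (cospan_ccomp E asx bx) = cc_legs (cospan_ccomp E as b)" by (simp add: cospan_ccomp_def)
  qed simp
  show ?thesis unfolding is_gdecomp_def arity_def
    using bx_cell asx_cell comp' glob eq comp las_x asx_nth ar
    by (auto simp: bx_def in_set_conv_nth)
qed

definition "ltt i = (if i = 0 then idt (cd (cc_left a)) else cc_left (as!i))"
definition "rtt i = (if Suc i = mm then idt (cd (cc_right a)) else cc_right (as!i))"
definition "tau i = \<lparr> cc_ins = [(canL a ks i, canR a ks i)], cc_out = (cmp (ff i) (PP i), cmp (ff i) (QQ i)),
   cc_left = ltt i, cc_right = rtt i, cc_legs = [idt ww] \<rparr>"
definition "tls = map tau [0..<mm]"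

lemma cdla: "cd (cc_left a) = dm (PP 0)" using a_fields(4) as_facts(2)[OF mpos] by simp
lemma cdra: "cd (cc_right a) = dm (QQ (mm - 1))" using a_fields(5) as_facts(4)[of "mm - 1"] mpos by simp

lemma ltt_facts: "i < mm \<Longrightarrow> ltt i \<in> arr \<and> cd (ltt i) = dm (PP i)"
  unfolding ltt_def using as_facts(1,2) cdla objP[OF mpos] c_id by auto

lemma rtt_facts: "i < mm \<Longrightarrow> rtt i \<in> arr \<and> cd (rtt i) = dm (QQ i)"
proof (cases "Suc i = mm")
  case True
  assume i: "i < mm"
  then have im: "i = mm - 1" using True by simp
  show ?thesis using True im cdra objP[OF i] c_id by (simp add: rtt_def)
next
  case False
  assume i: "i < mm"
  then show ?thesis using False as_facts(3,4)[OF i] by (simp add: rtt_def)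
qed

lemma canL_eq: "i < mm \<Longrightarrow> canL a ks i = cmp (cmp (ff i) (PP i)) (ltt i)"
proof -
  assume i: "i < mm"
  have fP: "cmp (ff i) (PP i) \<in> arr" "dm (cmp (ff i) (PP i)) = dm (PP i)"
    using b_facts[OF i] by (auto intro: c_comp)
  show ?thesis
  proof (cases "i = 0")
    case True
    then show ?thesis using b_ends(1) a_fields(2) fP cdla by (simp add: canL_def ltt_def c_idr)
  next
    case False
    have "canL a ks i = cmp (ff i) (cmp (PP i) (cc_left (as!i)))"
      using False bound0[OF i] as_facts(5)[OF i] by (simp add: canL_def)
    also have "\<dots> = cmp (cmp (ff i) (PP i)) (ltt i)"
      using assoc3[OF i as_facts(1,2)[OF i]] False by (simp add: ltt_def)
    finally show ?thesis .
  qed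
qed

lemma canR_eq: "i < mm \<Longrightarrow> canR a ks i = cmp (cmp (ff i) (QQ i)) (rtt i)"
proof -
  assume i: "i < mm"
  have fQ: "cmp (ff i) (QQ i) \<in> arr" "dm (cmp (ff i) (QQ i)) = dm (QQ i)"
    using b_facts[OF i] by (auto intro: c_comp)
  show ?thesis
  proof (cases "Suc i = mm")
    case True
    then have im: "i = mm - 1" by simp
    show ?thesis using True b_ends(2) a_fields(2) fQ cdra im by (simp add: canR_def rtt_def c_idr)
  next
    case False
    then have si: "Suc i < mm" using i by simp
    have "canR a ks i = cmp (ff (Suc i)) (cmp (PP (Suc i)) (cc_left (as!Suc i)))"
      using False bound0[OF si] as_facts(5)[OF si] by (simp add: canR_def)
    also have "\<dots> = cmp (cmp (ff (Suc i)) (PP (Suc i))) (cc_left (as!Suc i))"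
      using assoc3[OF si as_facts(1,2)[OF si]] .
    also have "\<dots> = cmp (cmp (ff i) (QQ i)) (rtt i)"
      using False b_facts(7)[OF si] b_facts(8)[OF i] rl[OF si] by (simp add: rtt_def)
    finally show ?thesis .
  qed
qed

lemma tau_cell: "i < mm \<Longrightarrow> tau i \<in> cospan_cells E"
proof -
  assume i: "i < mm"
  have fP: "cmp (ff i) (PP i) \<in> arr" "dm (cmp (ff i) (PP i)) = dm (PP i)" "cd (cmp (ff i) (PP i)) = ww"
    and fQ: "cmp (ff i) (QQ i) \<in> arr" "dm (cmp (ff i) (QQ i)) = dm (QQ i)" "cd (cmp (ff i) (QQ i)) = ww"
    using b_facts[OF i] by (auto intro: c_comp)
  have ik: "i < length ks" using i .
  note F = can_facts[OF acell ksum ik]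
  have cw: "cd (fst (cc_out a)) = ww" using a_fields(2) by (simp add: ww_def)
  have "ctyp (tau i)" unfolding ctyp_def tau_def
    using F fP fQ ltt_facts[OF i] rtt_facts[OF i] cw ww_obj c_id
    by (auto intro!: cospansI)
  moreover have "ceqs (tau i) (\<lambda>j. if j = 0 then canL a ks i else canR a ks i)"
    unfolding ceqs_def tau_def using canL_eq[OF i] canR_eq[OF i] F cw
    by (auto simp: c_idl)
  ultimately show ?thesis by (rule cell_intro)
qed

lemma step2: "gd_step (Cospan E) (asx, bx) (map (can a ks) [0..<mm], bcan a ks)"
proof -
  have m1: "mm - 1 < mm" "Suc (mm - 1) = mm" using mpos by auto
  have hd: "hd tls = tau 0" using mpos unfolding tls_def by (simp add: hd_map)
  have lst: "last tls = tau (mm-1)" using mpos unfolding tls_def by (simp add: last_map)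
  have cw: "cd (fst (cc_out a)) = ww" using a_fields(2) by (simp add: ww_def)
  have ob: "cd (cc_left a) \<in> cat_obj E" "cd (cc_right a) \<in> cat_obj E"
    using cdla cdra objP[OF mpos] objP[OF m1(1)] by auto
  have asx_eq: "asx = map2 (\<lambda>x s. cospan_ccomp E [x] s) (map (can a ks) [0..<mm]) tls"
  proof (rule nth_equalityI)
    show "length asx = length (map2 (\<lambda>x s. cospan_ccomp E [x] s) (map (can a ks) [0..<mm]) tls)"
      using las_x by (simp add: tls_def)
    fix i assume "i < length asx"
    then have i: "i < mm" using las_x by simp
    have ik: "i < length ks" using i .
    have ins: "take (ks!i) (drop (sum_list (take i ks)) (cc_ins a)) = cc_ins (as!i)"
      unfolding a_fields(1) by (subst concat_block_take[of _ ks]) (use i las ar in auto)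
    have "take (ks!i) (drop (sum_list (take i ks)) (cc_legs a)) = map (cmp (ff i)) (cc_legs (as!i))"
      unfolding a_fields(3)
      by (subst concat_block_take) (use i las lleg_b lleg_as in \<open>auto simp: ff_def\<close>)
    moreover have "map (cmp (idt ww)) (take (ks!i) (drop (sum_list (take i ks)) (cc_legs a)))
        = take (ks!i) (drop (sum_list (take i ks)) (cc_legs a))"
      by (rule map_idI) (use legs_id[OF acell] cw in \<open>auto dest: in_set_takeD in_set_dropD\<close>)
    ultimately have legs: "map (cmp (idt ww)) (take (ks!i) (drop (sum_list (take i ks)) (cc_legs a)))
        = map (cmp (ff i)) (cc_legs (as!i))" by simp
    have left: "cmp (ltt i) (canl a ks i) = cc_left (as!i)"
    proof (cases "i = 0")
      case True
      have "cc_left a \<in> arr" using cell_elim(1)[OF acell] unfolding ctyp_def by simp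
      then show ?thesis using True a_fields(4) by (simp add: ltt_def canl_def c_idl)
    next
      case False
      have f: "cmp (ff i) (PP i) \<in> arr" "dm (cmp (ff i) (PP i)) = dm (PP i)"
        using b_facts[OF i] by (auto intro: c_comp)
      have "dm (gfun a (sum_list (take i ks))) = dm (cc_left (as!i))"
        using canL_eq[OF i] False c_comp_dom[OF as_facts(1)[OF i] f(1)] as_facts(2)[OF i] f(2)
        by (simp add: canL_def ltt_def)
      then show ?thesis using False as_facts(1)[OF i] by (simp add: ltt_def canl_def c_idr)
    qed
    have right: "cmp (rtt i) (canr a ks i) = cc_right (as!i)"
    proof (cases "Suc i = mm")
      case True
      then have im: "i = mm - 1" by simp
      have "cc_right a \<in> arr" using cell_elim(1)[OF acell] unfolding ctyp_def by simp
      then show ?thesis using True a_fields(5) im by (simp add: rtt_def canr_def c_idl)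
    next
      case False
      then have si: "Suc i < mm" using i by simp
      have f: "cmp (ff (Suc i)) (PP (Suc i)) \<in> arr" "dm (cmp (ff (Suc i)) (PP (Suc i))) = dm (PP (Suc i))"
        using b_facts[OF si] by (auto intro: c_comp)
      have "dm (gfun a (sum_list (take (Suc i) ks))) = dm (cc_left (as!Suc i))"
        using canL_eq[OF si] c_comp_dom[OF as_facts(1)[OF si] f(1)] as_facts(2)[OF si] f(2)
        by (simp add: canL_def ltt_def)
      then show ?thesis using False as_facts(3)[OF i] rl[OF si] by (simp add: rtt_def canr_def c_idr)
    qed
    show "asx ! i = map2 (\<lambda>x s. cospan_ccomp E [x] s) (map (can a ks) [0..<mm]) tls ! i"
      using i asx_nth[OF i] ins legs left right
      by (simp add: tls_def cospan_ccomp_def can_def tau_def)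
  qed
  have beq: "bcan a ks = cospan_ccomp E tls bx"
  proof (rule cospan_cell.equality)
    show "cc_ins (bcan a ks) = cc_ins (cospan_ccomp E tls bx)"
      by (simp add: bcan_def cospan_ccomp_def tls_def tau_def o_def)
    show "cc_out (bcan a ks) = cc_out (cospan_ccomp E tls bx)"
      using a_fields(2) by (simp add: bcan_def cospan_ccomp_def bx_def)
    show "cc_left (bcan a ks) = cc_left (cospan_ccomp E tls bx)"
      using mpos hd b_ends(3,5) ob cdla
      by (simp add: bcan_def cospan_ccomp_def bx_def tau_def ltt_def tls_def) (metis c_id c_id_cod c_idl)
    show "cc_right (bcan a ks) = cc_right (cospan_ccomp E tls bx)"
      using mpos lst b_ends(4,6) ob cdra
      by (simp add: bcan_def cospan_ccomp_def bx_def tau_def rtt_def tls_def m1) (metis c_id c_id_cod c_idl)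
    show "cc_legs (bcan a ks) = cc_legs (cospan_ccomp E tls bx)"
      using ww_obj cw by (simp add: bcan_def cospan_ccomp_def bx_def tau_def tls_def zip_replicate2 c_idl c_id o_def tau_def map_replicate_const)
  qed simp
  show ?thesis unfolding gd_step_def
  proof (intro exI conjI allI impI)
    show "(asx, bx) = (map2 (\<lambda>x s. vccomp (Cospan E) [x] s) (map (can a ks) [0..<mm]) tls, bx)"
      using asx_eq by simp
    show "(map (can a ks) [0..<mm], bcan a ks) = (map (can a ks) [0..<mm], vccomp (Cospan E) tls bx)"
      using beq by simp
    show "tls \<noteq> []" using mpos by (simp add: tls_def)
    show "length tls = length (map (can a ks) [0..<mm])" by (simp add: tls_def)
    show "set tls \<subseteq> vcell (Cospan E)" using tau_cell by (auto simp: tls_def)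
    fix i assume i: "i < length tls"
    then have i': "i < mm" by (simp add: tls_def)
    show "arity (Cospan E) (tls ! i) = 1" using i' by (simp add: arity_def tls_def tau_def)
    show "composable (Cospan E) [map (can a ks) [0..<mm] ! i] (tls ! i)"
      using i' by (simp add: composable_def tls_def tau_def can_def)
  next
    show "composable (Cospan E) tls bx" unfolding composable_def
      using rl by (auto simp: tls_def bx_def tau_def sig_def PP_def QQ_def ltt_def rtt_def)
    show "vcleft (Cospan E) (hd tls) = tid (Cospan E) (tdom (Cospan E) (vcleft (Cospan E) (hd tls)))"
      using hd ob by (simp add: tau_def ltt_def)
    show "vcright (Cospan E) (last tls) = tid (Cospan E) (tdom (Cospan E) (vcright (Cospan E) (last tls)))"
      using lst ob m1 by (simp add: tau_def rtt_def)
  qed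
qed

lemma equiv_can: "gd_equiv (Cospan E) a ks (as, b) (map (can a ks) [0..<mm], bcan a ks)"
proof -
  let ?R = "\<lambda>d d'. is_gdecomp (Cospan E) a ks d \<and> is_gdecomp (Cospan E) a ks d' \<and>
             (gd_step (Cospan E) d d' \<or> gd_step (Cospan E) d' d)"
  have r1: "?R (as, b) (asx, bx)" using D asx_decomp step1 by (simp only: simp_thms)
  have r2: "?R (asx, bx) (map (can a ks) [0..<mm], bcan a ks)"
    using asx_decomp can_decomp[OF acell ksum ne] step2 by (simp only: simp_thms)
  have "?R\<^sup>*\<^sup>* (as, b) (map (can a ks) [0..<mm], bcan a ks)"
    using r_into_rtranclp[of ?R, OF r1] r2 by (rule rtranclp.rtrancl_into_rtrancl)
  then show ?thesis unfolding gd_equiv_def .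
qed

end

end

lemma gd_equiv_sym: "gd_equiv V a ks d d' \<Longrightarrow> gd_equiv V a ks d' d"
proof -
  let ?R = "\<lambda>d d'. is_gdecomp V a ks d \<and> is_gdecomp V a ks d' \<and> (gd_step V d d' \<or> gd_step V d' d)"
  have s: "symp ?R" unfolding symp_def by blast
  assume "gd_equiv V a ks d d'"
  then show "gd_equiv V a ks d' d" unfolding gd_equiv_def using sympD[OF symp_rtranclp[OF s]] by blast
qed

lemma gd_equiv_trans: "gd_equiv V a ks d d' \<Longrightarrow> gd_equiv V a ks d' d'' \<Longrightarrow> gd_equiv V a ks d d''"
  unfolding gd_equiv_def by (rule rtranclp_trans)

theorem proposition7p4:
  fixes E :: "('o, 'm) category"
  assumes "is_category E"
  shows "has_globular_decompositions (Cospan E)"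
  unfolding has_globular_decompositions_def has_nary_globular_decompositions_def
proof (intro allI ballI impI conjI)
  fix n \<alpha> ks
  assume a: "\<alpha> \<in> vcell (Cospan E)" and ar: "arity (Cospan E) \<alpha> = n" and ks: "ks \<noteq> [] \<and> sum_list ks = n"
  have a': "\<alpha> \<in> cospan_cells E" using a by (simp add: Cospan_simps[OF assms])
  have ks': "sum_list ks = length (cc_ins \<alpha>)" "ks \<noteq> []" using ks ar by (auto simp: arity_def Cospan_def)
  show "\<exists>d. is_gdecomp (Cospan E) \<alpha> ks d" using can_decomp[OF assms a' ks'] by blast
  fix d d' assume dd: "is_gdecomp (Cospan E) \<alpha> ks d \<and> is_gdecomp (Cospan E) \<alpha> ks d'"
  obtain as b where d: "d = (as, b)" by (cases d)
  obtain as' b' where d': "d' = (as', b')" by (cases d')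
  have e1: "gd_equiv (Cospan E) \<alpha> ks d (map (can E \<alpha> ks) [0..<length ks], bcan E \<alpha> ks)"
    using equiv_can[OF assms, of \<alpha> ks as b] dd d a' ks' by simp
  have e2: "gd_equiv (Cospan E) \<alpha> ks d' (map (can E \<alpha> ks) [0..<length ks], bcan E \<alpha> ks)"
    using equiv_can[OF assms, of \<alpha> ks as' b'] dd d' a' ks' by simp
  show "gd_equiv (Cospan E) \<alpha> ks d d'" using gd_equiv_trans[OF e1 gd_equiv_sym[OF e2]] .
qed

end
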